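(* Let $x_1,\dots,x_n$ be the values of the variables $x_i$ after the last iteration of Algorithm 1 on an instance of Problem (P). Then either $\sum_{i=1}^n z_ix_i=K$, or $x_i=q_i$ for every $i$.
   Context: Problem (P): given an integer $n\ge1$, reals $0<q_1\le\cdots\le q_n$, $z_1,\dots,z_n>0$ and $K>0$, maximize $\sum_{i=1}^n x_i$ subject to $0\le x_i\le q_i$ for all $i$, $0\le x_1\le x_2\le\cdots\le x_n$, and $\sum_{i=1}^n z_ix_i\le K$. For $1\le i<j\le n+1$ let $\mathrm{sum}(i,j)=z_i+z_{i+1}+\cdots+z_{j-1}$ and $\mathrm{avg}(i,j)=\mathrm{sum}(i,j)/(j-i)$. Algorithm 1: Initialize $S=\{0,n+1\}$, $y_i=\mathrm{avg}(i,n+1)$ and $x_i=0$ for $i=1,\dots,n$, and $\hat B=K$. While $\hat B>0$ and $S\ne\{0,1,\dots,n+1\}$, perform an iteration: let $i^*$ be the index $i\in\{1,\dots,n\}\setminus S$ minimizing $y_i$, ties broken in favour of the smallest index; let $i_L=\max\{j\in S:j<i^*\}$ and $i_R=\min\{j\in S:j>i^*\}$; set $d=\min\{\hat B/((i_R-i^* )y_{i^*}),\ q_{i^*}-x_{i^*}\}$; set $\hat B\leftarrow\hat B-d(i_R-i^* )y_{i^*}$; set $x_i\leftarrow x_i+d$ for all $i^*\le i<i_R$; set $y_i\leftarrow\mathrm{avg}(i,i^* )$ for all $i_L<i<i^*$; add $i^*$ to $S$. When the loop ends, output $x_1,\dots,x_n$. *)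

theory Defs
  imports Complex_Main
begin

text \<open>Problem (P) data: indices 1..n; q, z :: nat \<Rightarrow> real (values outside 1..n are irrelevant).\<close>

definition zsum :: "(nat \<Rightarrow> real) \<Rightarrow> nat \<Rightarrow> nat \<Rightarrow> real" where
  "zsum z i j = (\<Sum>k = i..<j. z k)"

definition zavg :: "(nat \<Rightarrow> real) \<Rightarrow> nat \<Rightarrow> nat \<Rightarrow> real" where
  "zavg z i j = zsum z i j / real (j - i)"

type_synonym alg_state = "nat set \<times> (nat \<Rightarrow> real) \<times> (nat \<Rightarrow> real) \<times> real"

definition alg_init :: "nat \<Rightarrow> (nat \<Rightarrow> real) \<Rightarrow> real \<Rightarrow> alg_state" where
  "alg_init n z K = ({0, n + 1}, (\<lambda>i. zavg z i (n + 1)), (\<lambda>i. 0), K)"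

definition alg_cond :: "nat \<Rightarrow> alg_state \<Rightarrow> bool" where
  "alg_cond n st = (case st of (S, y, x, B) \<Rightarrow> B > 0 \<and> S \<noteq> {0..n + 1})"

definition alg_iter :: "nat \<Rightarrow> (nat \<Rightarrow> real) \<Rightarrow> (nat \<Rightarrow> real) \<Rightarrow> alg_state \<Rightarrow> alg_state" where
  "alg_iter n q z st = (case st of (S, y, x, B) \<Rightarrow>
     let istar = (LEAST i. i \<in> {1..n} - S \<and> (\<forall>j \<in> {1..n} - S. y i \<le> y j));
         iL = Max {j \<in> S. j < istar};
         iR = Min {j \<in> S. j > istar};
         d = min (B / (real (iR - istar) * y istar)) (q istar - x istar);
         B' = B - d * real (iR - istar) * y istar;
         x' = (\<lambda>i. if istar \<le> i \<and> i < iR then x i + d else x i);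
         y' = (\<lambda>i. if iL < i \<and> i < istar then zavg z i istar else y i)
     in (insert istar S, y', x', B'))"

definition alg_step :: "nat \<Rightarrow> (nat \<Rightarrow> real) \<Rightarrow> (nat \<Rightarrow> real) \<Rightarrow> alg_state \<Rightarrow> alg_state" where
  "alg_step n q z st = (if alg_cond n st then alg_iter n q z st else st)"

text \<open>Every iteration adds a new element of {1..n} to S, so the loop performs at most n
  iterations; iterating the guarded step n times therefore yields the final state.\<close>
definition alg_final :: "nat \<Rightarrow> (nat \<Rightarrow> real) \<Rightarrow> (nat \<Rightarrow> real) \<Rightarrow> real \<Rightarrow> alg_state" where
  "alg_final n q z K = (alg_step n q z ^^ n) (alg_init n z K)"

definition alg_output :: "nat \<Rightarrow> (nat \<Rightarrow> real) \<Rightarrow> (nat \<Rightarrow> real) \<Rightarrow> real \<Rightarrow> nat \<Rightarrow> real" where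
  "alg_output n q z K = fst (snd (snd (alg_final n q z K)))"

end

theory Submission
  imports Defs
begin

definition ainv :: "nat \<Rightarrow> (nat \<Rightarrow> real) \<Rightarrow> (nat \<Rightarrow> real) \<Rightarrow> real \<Rightarrow> alg_state \<Rightarrow> bool" where
  "ainv n q z K st = (case st of (S, y, x, B) \<Rightarrow>
     finite S \<and> 0 \<in> S \<and> n + 1 \<in> S \<and> S \<subseteq> {0..n+1}
     \<and> (\<forall>i \<in> {1..n} - S. y i = zavg z i (Min {j \<in> S. j > i}))
     \<and> B = K - (\<Sum>i = 1..n. z i * x i) \<and> B \<ge> 0
     \<and> (B = 0 \<or> (\<forall>i \<in> S \<inter> {1..n}. x i = q i)))"

lemma iter_step:
  assumes inv: "ainv n q z K (S, y, x, B)" and c: "alg_cond n (S, y, x, B)"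
    and zpos: "\<forall>i \<in> {1..n}. 0 < z i"
  shows "ainv n q z K (alg_iter n q z (S, y, x, B))
     \<and> card (fst (alg_iter n q z (S, y, x, B)) \<inter> {1..n}) = Suc (card (S \<inter> {1..n}))"
proof -
  from inv have fin: "finite S" and S0: "0 \<in> S" and Sn: "n + 1 \<in> S" and Ssub: "S \<subseteq> {0..n+1}"
    and yinv: "\<forall>i \<in> {1..n} - S. y i = zavg z i (Min {j \<in> S. j > i})"
    and Binv: "B = K - (\<Sum>i = 1..n. z i * x i)" and Bge: "B \<ge> 0"
    and Bq: "B = 0 \<or> (\<forall>i \<in> S \<inter> {1..n}. x i = q i)"
    unfolding ainv_def by auto
  from c have Bpos: "B > 0" and Sne: "S \<noteq> {0..n+1}" unfolding alg_cond_def by auto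
  have Une: "{1..n} - S \<noteq> {}"
  proof
    assume "{1..n} - S = {}"
    then have "{1..n} \<subseteq> S" by auto
    then have "{0..n+1} \<subseteq> S" using S0 Sn
      by (auto simp: atLeastAtMost_iff) (metis Suc_eq_plus1 atLeastAtMost_iff le_SucE not_gr0 Suc_leI subsetD)
    with Ssub Sne show False by auto
  qed
  have finU: "finite ({1..n} - S)" by simp
  have "Min (y ` ({1..n} - S)) \<in> y ` ({1..n} - S)"
    using Min_in[of "y ` ({1..n} - S)"] finU Une by blast
  then obtain m where m: "m \<in> {1..n} - S" "y m = Min (y ` ({1..n} - S))"
    by (metis (no_types, lifting) imageE)
  have m2: "\<forall>j \<in> {1..n} - S. y m \<le> y j" using m(2) finU by auto
  define istar where "istar = (LEAST i. i \<in> {1..n} - S \<and> (\<forall>j \<in> {1..n} - S. y i \<le> y j))"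
  have ist: "istar \<in> {1..n} - S"
    unfolding istar_def by (rule conjunct1[OF LeastI[of _ m]]) (use m m2 in auto)
  define iL where "iL = Max {j \<in> S. j < istar}"
  define iR where "iR = Min {j \<in> S. j > istar}"
  have finL: "finite {j \<in> S. j < istar}" using fin by simp
  have neL: "0 \<in> {j \<in> S. j < istar}" using S0 ist by auto
  have iL: "iL \<in> S" "iL < istar" "\<forall>j \<in> S. j < istar \<longrightarrow> j \<le> iL"
  proof -
    have "iL \<in> {j \<in> S. j < istar}" unfolding iL_def using Max_in[OF finL] neL by blast
    then show "iL \<in> S" "iL < istar" by auto
    show "\<forall>j \<in> S. j < istar \<longrightarrow> j \<le> iL" unfolding iL_def using Max_ge[OF finL] by blast
  qed
  have finR: "finite {j \<in> S. j > istar}" using fin by simp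
  have neR: "n + 1 \<in> {j \<in> S. j > istar}" using Sn ist by auto
  have iR: "iR \<in> S" "istar < iR" "\<forall>j \<in> S. istar < j \<longrightarrow> iR \<le> j"
  proof -
    have "iR \<in> {j \<in> S. j > istar}" unfolding iR_def using Min_in[OF finR] neR by blast
    then show "iR \<in> S" "istar < iR" by auto
    show "\<forall>j \<in> S. istar < j \<longrightarrow> iR \<le> j" unfolding iR_def using Min_le[OF finR] by blast
  qed
  have iRle: "iR \<le> n + 1" using iR(1) Ssub by auto
  have yst: "y istar = zavg z istar iR" using yinv ist unfolding iR_def by auto
  define len where "len = real (iR - istar)"
  have lenpos: "len > 0" using iR(2) unfolding len_def by simp
  have zspos: "zsum z istar iR > 0"
    unfolding zsum_def
  proof (rule sum_pos)
    show "finite {istar..<iR}" by simp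
    show "{istar..<iR} \<noteq> {}" using iR(2) by simp
    fix i assume "i \<in> {istar..<iR}"
    then have "i \<in> {1..n}" using ist iRle by auto
    then show "0 < z i" using zpos by auto
  qed
  have lenY: "len * y istar = zsum z istar iR"
    using yst lenpos unfolding zavg_def len_def by simp
  define d where "d = min (B / (len * y istar)) (q istar - x istar)"
  define B' where "B' = B - d * len * y istar"
  define x' where "x' = (\<lambda>i. if istar \<le> i \<and> i < iR then x i + d else x i)"
  define y' where "y' = (\<lambda>i. if iL < i \<and> i < istar then zavg z i istar else y i)"
  have eq: "alg_iter n q z (S, y, x, B) = (insert istar S, y', x', B')"
    unfolding alg_iter_def Let_def istar_def iL_def iR_def
      d_def len_def B'_def x'_def y'_def by simp
  have sumx: "(\<Sum>i = 1..n. z i * x' i) = (\<Sum>i = 1..n. z i * x i) + d * zsum z istar iR"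
  proof -
    have "(\<Sum>i = 1..n. z i * x' i) = (\<Sum>i = 1..n. z i * x i + (if i \<in> {istar..<iR} then d * z i else 0))"
      by (rule sum.cong) (simp_all add: x'_def distrib_left mult.commute)
    also have "\<dots> = (\<Sum>i = 1..n. z i * x i) + (\<Sum>i = 1..n. if i \<in> {istar..<iR} then d * z i else 0)"
      by (simp add: sum.distrib)
    also have "(\<Sum>i = 1..n. if i \<in> {istar..<iR} then d * z i else 0) = (\<Sum>i \<in> {1..n} \<inter> {istar..<iR}. d * z i)"
      by (rule sum.inter_restrict[symmetric]) simp
    also have "{1..n} \<inter> {istar..<iR} = {istar..<iR}" using ist iRle by auto
    also have "(\<Sum>i \<in> {istar..<iR}. d * z i) = d * zsum z istar iR"
      by (simp add: zsum_def sum_distrib_left)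
    finally show ?thesis .
  qed
  have yS: "\<forall>i \<in> {1..n} - insert istar S. y' i = zavg z i (Min {j \<in> insert istar S. j > i})"
  proof
    fix i assume i: "i \<in> {1..n} - insert istar S"
    have finI: "finite {j \<in> insert istar S. j > i}" using fin by simp
    consider "iL < i \<and> i < istar" | "istar < i" | "i < istar \<and> i \<le> iL" using i by fastforce
    then show "y' i = zavg z i (Min {j \<in> insert istar S. j > i})"
    proof cases
      case 1
      have "Min {j \<in> insert istar S. j > i} = istar"
      proof (rule Min_eqI[OF finI])
        fix j assume j: "j \<in> {j \<in> insert istar S. j > i}"
        show "istar \<le> j"
        proof (rule ccontr)
          assume "\<not> istar \<le> j"
          then have "j \<le> iL" using j iL(3) by auto
          with j 1 show False by auto
        qed
      qed (use 1 in auto)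
      then show ?thesis using 1 unfolding y'_def by simp
    next
      case 2
      have "{j \<in> insert istar S. j > i} = {j \<in> S. j > i}" using 2 by auto
      then show ?thesis using 2 yinv i unfolding y'_def by auto
    next
      case 3
      have "i \<noteq> iL" using i iL(1) by auto
      with 3 have iiL: "i < iL" by simp
      have finS: "finite {j \<in> S. j > i}" using fin by simp
      have "iL \<in> {j \<in> S. j > i}" using iiL iL(1) by simp
      then have m0: "Min {j \<in> S. j > i} \<le> iL" using Min_le[OF finS] by blast
      have m0in: "Min {j \<in> S. j > i} \<in> {j \<in> S. j > i}"
        using Min_in[OF finS] \<open>iL \<in> {j \<in> S. j > i}\<close> by blast
      have "Min {j \<in> insert istar S. j > i} = Min {j \<in> S. j > i}"
      proof (rule Min_eqI[OF finI])
        fix j assume j: "j \<in> {j \<in> insert istar S. j > i}"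
        show "Min {j \<in> S. j > i} \<le> j"
        proof (cases "j = istar")
          case True then show ?thesis using m0 iL(2) by simp
        next
          case False then show ?thesis using j Min_le[OF finS] by auto
        qed
      qed (use m0in in auto)
      then show ?thesis using 3 yinv i unfolding y'_def by auto
    qed
  qed
  have B'eq: "B' = B - d * zsum z istar iR" unfolding B'_def using lenY by (simp add: mult.assoc)
  have dle: "d \<le> B / zsum z istar iR" unfolding d_def lenY by simp
  have B'ge: "B' \<ge> 0"
  proof -
    have "d * zsum z istar iR \<le> B" using dle zspos by (simp add: pos_le_divide_eq)
    then show ?thesis using B'eq by simp
  qed
  have B'q: "B' = 0 \<or> (\<forall>i \<in> insert istar S \<inter> {1..n}. x' i = q i)"
  proof (cases "d = B / zsum z istar iR")
    case True
    then have "B' = 0" using B'eq zspos by simp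
    then show ?thesis by simp
  next
    case False
    then have dq: "d = q istar - x istar" unfolding d_def lenY by (simp add: min_def split: if_splits)
    have "\<forall>i \<in> insert istar S \<inter> {1..n}. x' i = q i"
    proof
      fix i assume i: "i \<in> insert istar S \<inter> {1..n}"
      show "x' i = q i"
      proof (cases "i = istar")
        case True then show ?thesis using dq iR(2) unfolding x'_def by simp
      next
        case False
        then have iS: "i \<in> S \<inter> {1..n}" using i by auto
        have "\<not> (istar \<le> i \<and> i < iR)"
        proof
          assume h: "istar \<le> i \<and> i < iR"
          then have "istar < i" using False by simp
          then have "iR \<le> i" using iR(3) iS by auto
          with h show False by simp
        qed
        then have "x' i = x i" unfolding x'_def by (rule if_not_P)
        also have "x i = q i" using Bq Bpos iS by auto
        finally show ?thesis .
      qed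
    qed
    then show ?thesis by simp
  qed
  have inv': "ainv n q z K (insert istar S, y', x', B')"
    unfolding ainv_def using fin S0 Sn Ssub ist yS B'ge B'q B'eq Binv sumx
    by (auto simp: algebra_simps)
  have "insert istar S \<inter> {1..n} = insert istar (S \<inter> {1..n})" using ist by auto
  then have "card (insert istar S \<inter> {1..n}) = Suc (card (S \<inter> {1..n}))"
    using ist fin by simp
  with inv' eq show ?thesis by simp
qed

theorem lemma4:
  fixes n :: nat and q z :: "nat \<Rightarrow> real" and K :: real
  assumes "n \<ge> 1"
    and "\<forall>i \<in> {1..n}. 0 < q i"
    and "\<forall>i j. 1 \<le> i \<and> i \<le> j \<and> j \<le> n \<longrightarrow> q i \<le> q j"
    and "\<forall>i \<in> {1..n}. 0 < z i"
    and "K > 0"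
  shows "(\<Sum>i = 1..n. z i * alg_output n q z K i) = K
         \<or> (\<forall>i \<in> {1..n}. alg_output n q z K i = q i)"
proof -
  define st where "st k = (alg_step n q z ^^ k) (alg_init n z K)" for k
  have main: "ainv n q z K (st k) \<and> (\<not> alg_cond n (st k) \<or> k \<le> card (fst (st k) \<inter> {1..n}))" for k
  proof (induction k)
    case 0
    have "\<forall>i \<in> {1..n}. {j \<in> {0, n+1}. j > i} = {n+1}" by auto
    then have "ainv n q z K (alg_init n z K)"
      unfolding ainv_def alg_init_def using assms(5) by auto
    then show ?case unfolding st_def by simp
  next
    case (Suc k)
    obtain S y x B where sk: "st k = (S, y, x, B)" by (cases "st k") auto
    have sS: "st (Suc k) = alg_step n q z (st k)" unfolding st_def by simp
    show ?case
    proof (cases "alg_cond n (st k)")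
      case True
      have IH: "ainv n q z K (S, y, x, B)" "k \<le> card (S \<inter> {1..n})" using Suc.IH True sk by auto
      have "st (Suc k) = alg_iter n q z (S, y, x, B)" using sS True sk unfolding alg_step_def by simp
      then show ?thesis using iter_step[OF IH(1) True[unfolded sk] assms(4)] IH(2) by simp
    next
      case False
      then have "st (Suc k) = st k" using sS unfolding alg_step_def by simp
      then show ?thesis using Suc.IH False by simp
    qed
  qed
  obtain S y x B where sn: "st n = (S, y, x, B)" by (cases "st n") auto
  have out: "alg_output n q z K = x" using sn unfolding alg_output_def alg_final_def st_def by simp
  from main[of n] sn have inv: "ainv n q z K (S, y, x, B)"
    and cc: "\<not> alg_cond n (S, y, x, B) \<or> n \<le> card (S \<inter> {1..n})" by auto
  from inv have Binv: "B = K - (\<Sum>i = 1..n. z i * x i)" and Bge: "B \<ge> 0"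
    and Bq: "B = 0 \<or> (\<forall>i \<in> S \<inter> {1..n}. x i = q i)" unfolding ainv_def by auto
  have "B = 0 \<or> {1..n} \<subseteq> S"
  proof (cases "alg_cond n (S, y, x, B)")
    case True
    with cc have "n \<le> card (S \<inter> {1..n})" by simp
    moreover have "S \<inter> {1..n} \<subseteq> {1..n}" by auto
    ultimately have "S \<inter> {1..n} = {1..n}"
      by (metis card_atLeastAtMost card_subset_eq card_mono diff_Suc_1 finite_atLeastAtMost le_antisym)
    then show ?thesis by auto
  next
    case False
    then have "B \<le> 0 \<or> S = {0..n+1}" unfolding alg_cond_def by auto
    then show ?thesis using Bge by auto
  qed
  then have "B = 0 \<or> (\<forall>i \<in> {1..n}. x i = q i)" using Bq by auto
  then show ?thesis using Binv out by auto
qed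

end
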